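(* Let $p$ be a prime, $r\in\mathbb{N}$, and $M\in\mathrm{Mat}(d,\mathbb{Z})$. For $s\in\mathbb{N}$ let $\mathrm{Per}_s(M)$ be the set of periodic points of $x\mapsto Mx\bmod p^s$ on $(\mathbb{Z}/p^s\mathbb{Z})^d$, $\ker_s(N)=\{x\in(\mathbb{Z}/p^s\mathbb{Z})^d: Nx\equiv0\pmod{p^s}\}$, and $m(s)$ the smallest $m\ge0$ with $M^{k+m}\equiv M^m\pmod{p^s}$ for some $k\ge1$. Then, as $\mathbb{F}_p$-vector spaces (modules over $\mathbb{Z}/p\mathbb{Z}$), $$\mathrm{Per}_r(M)/p\,\mathrm{Per}_r(M)\simeq\mathrm{Per}_1(M),\qquad \ker_r(M^{m(r)})/p\ker_r(M^{m(r)})\simeq\ker_1(M^{m(1)}),$$ and $$|\mathrm{Per}_r(M)|=p^{rd'}=|\mathrm{Per}_1(M)|^r,\qquad |\ker_r(M^{m(r)})|=p^{r(d-d')}=|\ker_1(M^{m(1)})|^r,$$ where $d'$ is the rank of the free $\mathbb{Z}/p^r\mathbb{Z}$-module $\mathrm{Per}_r(M)$.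
   Context: A point $x$ is periodic if $M^kx\equiv x$ for some $k\ge1$. $\mathrm{Per}_r(M)$ and $\ker_r(M^{m(r)})$ are free $\mathbb{Z}/p^r\mathbb{Z}$-modules with $(\mathbb{Z}/p^r\mathbb{Z})^d=\mathrm{Per}_r(M)\oplus\ker_r(M^{m(r)})$. *)

theory Defs
  imports "HOL-Analysis.Analysis" "HOL-Algebra.Coset"
begin

definition mpow :: "int^'d^'d \<Rightarrow> nat \<Rightarrow> int^'d^'d" where
  "mpow M n = ((\<lambda>A. M ** A) ^^ n) (mat 1)"

definition vred :: "int \<Rightarrow> nat \<Rightarrow> int^'d \<Rightarrow> int^'d" where
  "vred p s x = (\<chi> i. x $ i mod p ^ s)"

(* (Z/p^s Z)^d, represented by vectors with entries in {0..<p^s}. *)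
definition Vs :: "int \<Rightarrow> nat \<Rightarrow> (int^'d) set" where
  "Vs p s = {x. \<forall>i. 0 \<le> x $ i \<and> x $ i < p ^ s}"

definition Tmap :: "int \<Rightarrow> nat \<Rightarrow> int^'d^'d \<Rightarrow> int^'d \<Rightarrow> int^'d" where
  "Tmap p s M x = vred p s (M *v x)"

definition Per :: "int \<Rightarrow> nat \<Rightarrow> int^'d^'d \<Rightarrow> (int^'d) set" where
  "Per p s M = {x \<in> Vs p s. \<exists>k\<ge>1. (Tmap p s M ^^ k) x = x}"

definition Ker :: "int \<Rightarrow> nat \<Rightarrow> int^'d^'d \<Rightarrow> (int^'d) set" where
  "Ker p s N = {x \<in> Vs p s. vred p s (N *v x) = 0}"

definition mexp :: "int \<Rightarrow> nat \<Rightarrow> int^'d^'d \<Rightarrow> nat" where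
  "mexp p s M = (LEAST m. \<exists>k\<ge>1. \<forall>i j.
      (mpow M (k + m)) $ i $ j mod p ^ s = (mpow M m) $ i $ j mod p ^ s)"

definition vgrp :: "int \<Rightarrow> nat \<Rightarrow> (int^'d) monoid" where
  "vgrp p s = \<lparr>carrier = Vs p s, monoid.mult = (\<lambda>x y. vred p s (x + y)), one = 0\<rparr>"

definition subgrp :: "int \<Rightarrow> nat \<Rightarrow> (int^'d) set \<Rightarrow> (int^'d) monoid" where
  "subgrp p s S = (vgrp p s)\<lparr>carrier := S\<rparr>"

definition pmul :: "int \<Rightarrow> nat \<Rightarrow> (int^'d) set \<Rightarrow> (int^'d) set" where
  "pmul p s S = (\<lambda>x. vred p s (p *s x)) ` S"

definition free_rank :: "int \<Rightarrow> nat \<Rightarrow> (int^'d) set \<Rightarrow> nat \<Rightarrow> bool" where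
  "free_rank p s S e = (\<exists>b :: nat \<Rightarrow> int^'d. (\<forall>i<e. b i \<in> S) \<and>
     bij_betw (\<lambda>c. vred p s (\<Sum>i<e. c i *s b i))
       {c :: nat \<Rightarrow> int. (\<forall>i<e. 0 \<le> c i \<and> c i < p ^ s) \<and> (\<forall>i\<ge>e. c i = 0)} S)"

end

theory Submission
  imports Defs
begin

definition vdvd :: "int \<Rightarrow> int^'d \<Rightarrow> bool" where
  "vdvd q v \<longleftrightarrow> (\<forall>i. q dvd v$i)"

lemma vdvd_0[simp]: "vdvd q 0" by (simp add: vdvd_def)
lemma vdvd_add: "vdvd q x \<Longrightarrow> vdvd q y \<Longrightarrow> vdvd q (x + y)" by (simp add: vdvd_def)
lemma vdvd_diff: "vdvd q x \<Longrightarrow> vdvd q y \<Longrightarrow> vdvd q (x - y)" by (simp add: vdvd_def)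
lemma vdvd_neg: "vdvd q (- x) \<longleftrightarrow> vdvd q x" by (simp add: vdvd_def)
lemma vdvd_smult: "vdvd q x \<Longrightarrow> vdvd q (c *s x)" by (simp add: vdvd_def)
lemma vdvd_mono: "q' dvd q \<Longrightarrow> vdvd q x \<Longrightarrow> vdvd q' x"
  by (meson dvd_trans vdvd_def)
lemma vdvd_mv: "vdvd q x \<Longrightarrow> vdvd q (E *v x)"
  by (simp add: vdvd_def matrix_vector_mult_def dvd_sum)
lemma vdvd_sum: "(\<And>i. i \<in> A \<Longrightarrow> vdvd q (f i)) \<Longrightarrow> vdvd q (sum f A)"
  by (simp add: vdvd_def dvd_sum)
lemma vdvd_swap: "vdvd q (x - y) \<longleftrightarrow> vdvd q (y - x)"
  by (metis minus_diff_eq vdvd_neg)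
lemma vdvd_trans: "vdvd q (x - y) \<Longrightarrow> vdvd q (y - z) \<Longrightarrow> vdvd q (x - z)"
  using vdvd_add[of q "x - y" "y - z"] by simp
lemma vdvd_p_smult: "vdvd q (c *s x) \<Longrightarrow> c \<noteq> 0 \<Longrightarrow> vdvd (c * q) (c *s x) \<Longrightarrow> vdvd q x"
  by (auto simp: vdvd_def)
lemma vdvd_cancel: "(c::int) \<noteq> 0 \<Longrightarrow> vdvd (c * q) (c *s x) \<Longrightarrow> vdvd q x"
  by (auto simp: vdvd_def)
lemma vdvd_smult2: "vdvd q x \<Longrightarrow> vdvd (c * q) (c *s x)"
  by (auto simp: vdvd_def)
lemma vdvd_split: "vdvd c x \<Longrightarrow> x = c *s (\<chi> i. x$i div c)"
  by (auto simp: vdvd_def vec_eq_iff)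

lemma mv_add: "E *v (x + y) = E *v x + E *v (y::int^'d)"
  by (simp add: vec_eq_iff matrix_vector_mult_def sum.distrib algebra_simps)
lemma mv_diff: "E *v (x - y) = E *v x - E *v (y::int^'d)"
  by (simp add: vec_eq_iff matrix_vector_mult_def sum_subtractf algebra_simps)
lemma mv_smult: "E *v (c *s x) = c *s (E *v (x::int^'d))"
  by (simp add: vec_eq_iff matrix_vector_mult_def sum_distrib_left algebra_simps)
lemma mv_sum: "E *v (sum f A) = (\<Sum>i\<in>A. E *v (f i::int^'d))"
  by (induction A rule: infinite_finite_induct) (simp_all add: mv_add)

lemma vred_eq_iff: "vred p s x = vred p s y \<longleftrightarrow> vdvd (p^s) (x - y)"
  by (simp add: vred_def vdvd_def vec_eq_iff mod_eq_dvd_iff)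
lemma vred_in: "p > 0 \<Longrightarrow> vred p s x \<in> Vs p s"
  by (simp add: vred_def Vs_def)
lemma vred_id: "x \<in> Vs p s \<Longrightarrow> vred p s x = x"
  by (simp add: vred_def Vs_def vec_eq_iff)
lemma vred_diff: "vdvd (p^s) (vred p s x - x)"
  unfolding vdvd_def vred_def by (simp add: mod_eq_dvd_iff[symmetric])
lemma Vs_eq: "x \<in> Vs p s \<Longrightarrow> y \<in> Vs p s \<Longrightarrow> vdvd (p^s) (x - y) \<Longrightarrow> x = y"
  by (metis vred_eq_iff vred_id)
lemma vred_zero_iff: "vred p s x = 0 \<longleftrightarrow> vdvd (p^s) x"
  using vred_eq_iff[of p s x 0] by (simp add: vred_def vec_eq_iff)



definition lc :: "nat \<Rightarrow> (nat \<Rightarrow> int) \<Rightarrow> (nat \<Rightarrow> int^'d) \<Rightarrow> int^'d" where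
  "lc e c b = (\<Sum>i<e. c i *s b i)"

definition indep :: "int \<Rightarrow> nat \<Rightarrow> (nat \<Rightarrow> int^'d) \<Rightarrow> bool" where
  "indep q e b \<longleftrightarrow> (\<forall>c. vdvd q (lc e c b) \<longrightarrow> (\<forall>i<e. q dvd c i))"

definition Box :: "int \<Rightarrow> nat \<Rightarrow> (nat \<Rightarrow> int) set" where
  "Box q e = {c. (\<forall>i<e. 0 \<le> c i \<and> c i < q) \<and> (\<forall>i\<ge>e. c i = 0)}"

lemma vdvd_lc: "(\<And>i. i < e \<Longrightarrow> vdvd q (c i *s b i)) \<Longrightarrow> vdvd q (lc e c b)"
  unfolding lc_def by (rule vdvd_sum) auto

lemma lc_diff_c: "lc e c b - lc e c' b = lc e (\<lambda>i. c i - c' i) b"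
  by (simp add: lc_def sum_subtractf[symmetric] vec_eq_iff algebra_simps)
lemma lc_diff_b: "lc e c b - lc e c b' = lc e c (\<lambda>i. b i - b' i)"
  by (simp add: lc_def sum_subtractf[symmetric] vec_eq_iff algebra_simps)
lemma lc_add_c: "lc e c b + lc e c' b = lc e (\<lambda>i. c i + c' i) b"
  by (simp add: lc_def sum.distrib[symmetric] vec_eq_iff algebra_simps)
lemma lc_smult: "lc e (\<lambda>i. a * c i) b = a *s lc e c b"
  by (simp add: lc_def vec_eq_iff sum_distrib_left algebra_simps)
lemma lc_mv: "E *v lc e c b = lc e c (\<lambda>i. E *v b i)"
  by (simp add: lc_def mv_sum mv_smult)
lemma lc_cong: "(\<And>i. i < e \<Longrightarrow> c i = c' i) \<Longrightarrow> lc e c b = lc e c' b"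
  by (simp add: lc_def)
lemma lc_cong_b: "(\<And>i. i < e \<Longrightarrow> b i = b' i) \<Longrightarrow> lc e c b = lc e c b'"
  by (simp add: lc_def)
lemma lc_Suc: "lc (Suc e) c b = lc e c b + c e *s b e"
  by (simp add: lc_def)

lemma vdvd_smult_dvd: "q dvd a \<Longrightarrow> vdvd q (a *s x)"
  by (simp add: vdvd_def)
lemma vdvd_lc_c: "(\<And>i. i < e \<Longrightarrow> q dvd (c i - c' i)) \<Longrightarrow> vdvd q (lc e c b - lc e c' b)"
proof -
  assume h: "\<And>i. i < e \<Longrightarrow> q dvd (c i - c' i)"
  have "vdvd q (lc e (\<lambda>i. c i - c' i) b)" by (rule vdvd_lc) (rule vdvd_smult_dvd, rule h)
  thus ?thesis by (simp only: lc_diff_c)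
qed
lemma vdvd_lc_b: "(\<And>i. i < e \<Longrightarrow> vdvd q (b i - b' i)) \<Longrightarrow> vdvd q (lc e c b - lc e c b')"
proof -
  assume h: "\<And>i. i < e \<Longrightarrow> vdvd q (b i - b' i)"
  have "vdvd q (lc e c (\<lambda>i. b i - b' i))" by (rule vdvd_lc) (rule vdvd_smult, rule h)
  thus ?thesis by (simp only: lc_diff_b)
qed

lemma int_eq_of_dvd: "0 \<le> (a::int) \<Longrightarrow> a < q \<Longrightarrow> 0 \<le> b \<Longrightarrow> b < q \<Longrightarrow> q dvd (a - b) \<Longrightarrow> a = b"
  by (metis mod_eq_dvd_iff mod_pos_pos_trivial)

lemma Box_bij: "bij_betw (\<lambda>c. restrict c {..<e}) (Box q e) (PiE {..<e} (\<lambda>_. {0..<q}))"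
proof (rule bij_betwI[where g="\<lambda>f i. if i < e then f i else 0"])
  show "(\<lambda>c. restrict c {..<e}) \<in> Box q e \<rightarrow> PiE {..<e} (\<lambda>_. {0..<q})"
    by (simp add: Box_def PiE_iff)
  show "(\<lambda>f i. if i < e then f i else 0) \<in> PiE {..<e} (\<lambda>_. {0..<q}) \<rightarrow> Box q e"
    by (simp add: Box_def PiE_iff)
  show "(\<lambda>i. if i < e then restrict x {..<e} i else 0) = x" if "x \<in> Box q e" for x
    using that by (simp add: Box_def fun_eq_iff)
  show "restrict (\<lambda>i. if i < e then y i else 0) {..<e} = y" if "y \<in> PiE {..<e} (\<lambda>_. {0..<q})" for y
    using that by (simp add: fun_eq_iff PiE_iff extensional_def)
qed

lemma card_Box: "card (Box q e) = nat q ^ e"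
  using bij_betw_same_card[OF Box_bij[of e q]] by (simp add: card_PiE)
lemma finite_Box: "finite (Box q e)"
  using bij_betw_finite[OF Box_bij[of e q]] by (simp add: finite_PiE)

lemma vecset_bij: "bij_betw vec_nth {x::'a^'d. \<forall>i. x$i \<in> A} (PiE UNIV (\<lambda>_. A))"
proof (rule bij_betwI[where g=vec_lambda])
  show "vec_nth \<in> {x::'a^'d. \<forall>i. x$i \<in> A} \<rightarrow> PiE UNIV (\<lambda>_. A)" by (simp add: PiE_iff)
  show "vec_lambda \<in> PiE UNIV (\<lambda>_. A) \<rightarrow> {x::'a^'d. \<forall>i. x$i \<in> A}" by (simp add: PiE_iff)
  show "vec_lambda (vec_nth x) = x" for x :: "'a^'d" by simp
  show "vec_nth (vec_lambda y :: 'a^'d) = y" for y by (simp add: fun_eq_iff)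
qed

lemma finite_vecset: "finite A \<Longrightarrow> finite {x::'a^'d. \<forall>i. x$i \<in> A}"
  by (subst bij_betw_finite[OF vecset_bij]) (simp add: finite_PiE)

lemma card_vecset: "card {x::'a^'d. \<forall>i. x$i \<in> A} = card A ^ CARD('d)"
  using bij_betw_same_card[OF vecset_bij] by (simp add: card_PiE)

lemma Vs_vecset: "Vs p s = {x::int^'d. \<forall>i. x$i \<in> {0..<p^s}}"
  by (auto simp: Vs_def)

lemma finite_Vs: "finite (Vs p s)"
  unfolding Vs_vecset by (rule finite_vecset) simp

lemma card_Vs: "card (Vs p s :: (int^'d) set) = nat (p^s) ^ CARD('d)"
  unfolding Vs_vecset card_vecset by simp

lemma basis1:
  fixes E :: "int^'d^'d" and p :: int
  assumes pr: "prime p"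
  shows "\<exists>e b. (\<forall>i<e. vdvd p (E *v b i - b i)) \<and> indep p e b \<and>
     (\<forall>y. vdvd p (E *v y - y) \<longrightarrow> (\<exists>c. vdvd p (y - lc e c b)))"
proof -
  have p0: "p > 0" using prime_gt_0_int[OF pr] .
  have p1: "p > 1" using prime_gt_1_int[OF pr] .
  define Pd where "Pd x \<longleftrightarrow> vdvd p (E *v x - x)" for x :: "int^'d"
  define A where "A = {e. \<exists>b. (\<forall>i<e. Pd (b i)) \<and> indep p e b}"
  have bound: "e \<le> CARD('d)" if "e \<in> A" for e
  proof -
    from that obtain b :: "nat \<Rightarrow> int^'d" where b: "indep p e b" unfolding A_def by blast
    have "inj_on (\<lambda>c. vred p 1 (lc e c b)) (Box p e)"
    proof (rule inj_onI)
      fix c c' assume c: "c \<in> Box p e" and c': "c' \<in> Box p e"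
        and eq: "vred p 1 (lc e c b) = vred p 1 (lc e c' b)"
      have "vdvd p (lc e (\<lambda>i. c i - c' i) b)"
        using eq unfolding vred_eq_iff lc_diff_c by simp
      with b have "\<forall>i<e. p dvd (c i - c' i)" unfolding indep_def by blast
      show "c = c'"
      proof (rule ext)
        fix i show "c i = c' i"
        proof (cases "i < e")
          case True
          thus ?thesis using c c' \<open>\<forall>i<e. p dvd (c i - c' i)\<close>
            by (intro int_eq_of_dvd[of _ p]) (auto simp: Box_def)
        next
          case False
          thus ?thesis using c c' by (auto simp: Box_def)
        qed
      qed
    qed
    moreover have "(\<lambda>c. vred p 1 (lc e c b)) ` Box p e \<subseteq> Vs p 1"
      using vred_in[OF p0] by auto
    ultimately have "card (Box p e) \<le> card (Vs p 1 :: (int^'d) set)"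
      by (metis card_image card_mono finite_Vs)
    hence "nat p ^ e \<le> nat p ^ CARD('d)"
      by (simp add: card_Box card_Vs)
    moreover have "1 < nat p" using p1 by simp
    ultimately show ?thesis by (rule power_le_imp_le_exp[rotated])
  qed
  have "0 \<in> A" by (auto simp: A_def indep_def)
  have finA: "finite A" by (rule finite_subset[OF _ finite_atMost[of "CARD('d)"]]) (auto dest: bound)
  define e where "e = Max A"
  have "e \<in> A" unfolding e_def using finA \<open>0 \<in> A\<close> by (intro Max_in) auto
  then obtain b where bP: "\<forall>i<e. Pd (b i)" and bi: "indep p e b" unfolding A_def by auto
  have span: "\<exists>c. vdvd p (y - lc e c b)" if y: "Pd y" for y
  proof (rule ccontr)
    assume ns: "\<not> (\<exists>c. vdvd p (y - lc e c b))"
    define b' where "b' = b(e := y)"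
    have lcb': "lc e c b' = lc e c b" for c by (rule lc_cong_b) (simp add: b'_def)
    have "indep p (Suc e) b'"
      unfolding indep_def
    proof (rule allI, rule impI)
      fix c assume h: "vdvd p (lc (Suc e) c b')"
      hence h2: "vdvd p (lc e c b + c e *s y)" unfolding lc_Suc lcb' by (simp add: b'_def)
      have ce: "p dvd c e"
      proof (rule ccontr)
        assume nd: "\<not> p dvd c e"
        have "coprime p (c e)" using pr nd by (simp add: prime_imp_coprime)
        then obtain u v where uv: "u * c e + v * p = 1"
          by (metis bezout_int coprime_iff_gcd_eq_1 gcd.commute)
        have "vdvd p (u *s (lc e c b + c e *s y))" using h2 by (rule vdvd_smult)
        moreover have "vdvd p ((v * p) *s y)" by (simp add: vdvd_def)
        moreover have "y - lc e (\<lambda>i. - u * c i) b = u *s (lc e c b + c e *s y) + (v * p) *s y"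
        proof -
          have "(u * c e + v * p) * t = t" for t using uv by simp
          hence H: "t = p * (v * t) + u * (c e * t)" for t by (metis mult.assoc mult.commute distrib_right add.commute)
          show ?thesis unfolding lc_smult apply (simp add: vec_eq_iff algebra_simps) using H by blast
        qed
        ultimately have "vdvd p (y - lc e (\<lambda>i. - u * c i) b)"
          by (simp add: vdvd_add)
        thus False using ns by blast
      qed
      hence "vdvd p (c e *s y)" by (auto simp: vdvd_def)
      hence "vdvd p (lc e c b)" using h2 by (metis add_diff_cancel_right' vdvd_diff)
      hence "\<forall>i<e. p dvd c i" using bi unfolding indep_def by blast
      thus "\<forall>i<Suc e. p dvd c i" using ce less_Suc_eq by auto
    qed
    moreover have "\<forall>i<Suc e. Pd (b' i)" using bP y by (simp add: b'_def less_Suc_eq)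
    ultimately have "Suc e \<in> A" unfolding A_def by blast
    hence "Suc e \<le> e" unfolding e_def using finA by (rule Max_ge[rotated])
    thus False by simp
  qed
  show ?thesis using bP bi span unfolding Pd_def by blast
qed

definition FixS :: "int \<Rightarrow> nat \<Rightarrow> int^'d^'d \<Rightarrow> (int^'d) set" where
  "FixS p s E = {x \<in> Vs p s. vdvd (p^s) (E *v x - x)}"

definition idem :: "int \<Rightarrow> int^'d^'d \<Rightarrow> bool" where
  "idem q E \<longleftrightarrow> (\<forall>x. vdvd q (E *v (E *v x) - E *v x))"

lemma vdvd_one[simp]: "vdvd 1 x" by (simp add: vdvd_def)

lemma mod_diff_dvd: "(q::int) dvd (a mod q - a)"
  by (simp add: mod_eq_dvd_iff[symmetric])

lemma smult_diff: "c *s (x - y) = c *s x - c *s (y::int^'d)"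
  by (simp add: vec_eq_iff algebra_simps)

lemma free_rank_card: "free_rank p s S d \<Longrightarrow> card S = nat (p^s) ^ d"
proof -
  assume "free_rank p s S d"
  then obtain f where "bij_betw f (Box (p^s) d) S" unfolding free_rank_def Box_def by blast
  hence "card (Box (p^s) d) = card S" by (rule bij_betw_same_card)
  thus ?thesis by (simp add: card_Box)
qed

lemma lift:
  fixes E :: "int^'d^'d" and bb :: "nat \<Rightarrow> int^'d"
  assumes pr: "prime p" and t1: "t \<ge> 1" and id: "idem (p^t) E"
    and bbP: "\<forall>i<e. vdvd p (E *v bb i - bb i)" and bbi: "indep p e bb"
    and bbs: "\<forall>y. vdvd p (E *v y - y) \<longrightarrow> (\<exists>c. vdvd p (y - lc e c bb))"
  shows "free_rank p t (FixS p t E) e \<and> card (FixS p t E) = nat (p^t) ^ e"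
proof -
  have p0: "p > 0" using prime_gt_0_int[OF pr] .
  have pt: "p dvd p^t" using t1 by (simp add: dvd_power)
  define B where "B i = vred p t (E *v bb i)" for i
  have hBa: "vdvd (p^t) (E *v B i - B i)" for i
  proof -
    have 1: "vdvd (p^t) (B i - E *v bb i)" unfolding B_def by (rule vred_diff)
    have 2: "vdvd (p^t) (E *v B i - E *v (E *v bb i))" unfolding mv_diff[symmetric] by (rule vdvd_mv[OF 1])
    have 3: "vdvd (p^t) (E *v (E *v bb i) - E *v bb i)" using id unfolding idem_def by blast
    show ?thesis using vdvd_trans[OF vdvd_trans[OF 2 3] vdvd_swap[THEN iffD1, OF 1]] .
  qed
  have hBb: "vdvd p (B i - bb i)" if "i < e" for i
  proof -
    have 1: "vdvd p (B i - E *v bb i)" unfolding B_def by (rule vdvd_mono[OF pt vred_diff])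
    have 2: "vdvd p (E *v bb i - bb i)" using bbP that by blast
    show ?thesis by (rule vdvd_trans[OF 1 2])
  qed
  have hlc: "vdvd p (lc e c B - lc e c bb)" for c by (rule vdvd_lc_b) (rule hBb)
  have indep_all: "vdvd (p^n) (lc e c B) \<longrightarrow> (\<forall>i<e. p^n dvd c i)" for n c
  proof (induction n arbitrary: c)
    case 0 thus ?case by simp
  next
    case (Suc n)
    show ?case
    proof (intro impI allI)
      fix i assume h: "vdvd (p ^ Suc n) (lc e c B)" and i: "i < e"
      have h1: "vdvd p (lc e c B)" by (rule vdvd_mono[OF _ h]) simp
      have "vdvd p (lc e c bb)" using vdvd_diff[OF h1 hlc[of c]] by simp
      hence dv: "\<forall>i<e. p dvd c i" using bbi unfolding indep_def by blast
      define c' where "c' i = c i div p" for i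
      have "lc e c B = lc e (\<lambda>i. p * c' i) B" by (rule lc_cong) (simp add: c'_def dv)
      hence "lc e c B = p *s lc e c' B" by (simp add: lc_smult)
      hence "vdvd (p * p^n) (p *s lc e c' B)" using h by simp
      hence "vdvd (p^n) (lc e c' B)" by (rule vdvd_cancel[rotated]) (use p0 in simp)
      hence "p^n dvd c' i" using Suc.IH[of c'] i by simp
      hence "p * p^n dvd p * c' i" by (rule mult_dvd_mono[OF dvd_refl])
      moreover have "p * c' i = c i" using dv i unfolding c'_def by simp
      ultimately show "p ^ Suc n dvd c i" by simp
    qed
  qed
  have span_all: "n \<le> t \<longrightarrow> (\<forall>y. vdvd (p^n) (E *v y - y) \<longrightarrow> (\<exists>c. vdvd (p^n) (y - lc e c B)))" for n
  proof (induction n)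
    case 0 thus ?case by simp
  next
    case (Suc n)
    show ?case
    proof (intro impI allI)
      fix y assume nt: "Suc n \<le> t" and hy: "vdvd (p ^ Suc n) (E *v y - y)"
      have "vdvd p (E *v y - y)" by (rule vdvd_mono[OF _ hy]) simp
      then obtain a where a: "vdvd p (y - lc e a bb)" using bbs by blast
      have "vdvd p ((y - lc e a bb) - (lc e a B - lc e a bb))" by (rule vdvd_diff[OF a hlc])
      hence wp: "vdvd p (y - lc e a B)" by simp
      define w where "w = y - lc e a B"
      define z where "z = (\<chi> i. w$i div p)"
      have wz: "w = p *s z" unfolding z_def by (rule vdvd_split) (simp add: wp w_def)
      have dvt: "p ^ Suc n dvd p ^ t" using nt by (rule le_imp_power_dvd)
      have "vdvd (p ^ Suc n) (lc e a (\<lambda>i. E *v B i - B i))"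
        by (rule vdvd_lc, rule vdvd_smult, rule vdvd_mono[OF dvt hBa])
      hence "vdvd (p ^ Suc n) (E *v lc e a B - lc e a B)" by (simp add: lc_mv lc_diff_b)
      hence "vdvd (p ^ Suc n) ((E *v y - y) - (E *v lc e a B - lc e a B))" by (rule vdvd_diff[OF hy])
      moreover have "(E *v y - y) - (E *v lc e a B - lc e a B) = E *v w - w"
        by (simp add: w_def mv_diff algebra_simps)
      ultimately have "vdvd (p ^ Suc n) (E *v w - w)" by simp
      moreover have "E *v w - w = p *s (E *v z - z)" by (simp add: wz mv_smult smult_diff)
      ultimately have "vdvd (p * p^n) (p *s (E *v z - z))" by simp
      hence "vdvd (p^n) (E *v z - z)" by (rule vdvd_cancel[rotated]) (use p0 in simp)
      then obtain c where c: "vdvd (p^n) (z - lc e c B)" using Suc nt by auto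
      have "vdvd (p * p^n) (p *s (z - lc e c B))" by (rule vdvd_smult2[OF c])
      moreover have "p *s (z - lc e c B) = y - lc e (\<lambda>i. a i + p * c i) B"
      proof -
        have 1: "lc e (\<lambda>i. a i + p * c i) B = lc e a B + p *s lc e c B"
          using lc_add_c[of e a B "\<lambda>i. p * c i"] lc_smult[of e p c B] by simp
        have 2: "y - lc e a B = p *s z" using wz w_def by simp
        show ?thesis unfolding 1 smult_diff 2[symmetric] by (simp add: diff_diff_eq)
      qed
      ultimately show "\<exists>c. vdvd (p ^ Suc n) (y - lc e c B)" by auto
    qed
  qed
  have inB: "\<forall>i<e. B i \<in> FixS p t E" using hBa by (simp add: FixS_def B_def vred_in[OF p0])
  define \<phi> where "\<phi> c = vred p t (lc e c B)" for c
  have inj: "inj_on \<phi> (Box (p^t) e)"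
  proof (rule inj_onI)
    fix c c' assume c: "c \<in> Box (p^t) e" and c': "c' \<in> Box (p^t) e" and eq: "\<phi> c = \<phi> c'"
    have "vdvd (p^t) (lc e (\<lambda>i. c i - c' i) B)"
      using eq unfolding \<phi>_def vred_eq_iff lc_diff_c by simp
    hence dd: "\<forall>i<e. p^t dvd (c i - c' i)" using indep_all by blast
    show "c = c'"
    proof (rule ext)
      fix i show "c i = c' i"
      proof (cases "i < e")
        case True
        thus ?thesis using c c' dd by (intro int_eq_of_dvd[of _ "p^t"]) (auto simp: Box_def)
      next
        case False
        thus ?thesis using c c' by (auto simp: Box_def)
      qed
    qed
  qed
  have img1: "\<phi> ` Box (p^t) e \<subseteq> FixS p t E"
  proof
    fix x assume "x \<in> \<phi> ` Box (p^t) e"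
    then obtain c where x: "x = vred p t (lc e c B)" unfolding \<phi>_def by blast
    define L where "L = lc e c B"
    have 1: "vdvd (p^t) (x - L)" unfolding x L_def by (rule vred_diff)
    have 2: "vdvd (p^t) (E *v x - E *v L)" unfolding mv_diff[symmetric] by (rule vdvd_mv[OF 1])
    have "vdvd (p^t) (lc e c (\<lambda>i. E *v B i - B i))" by (rule vdvd_lc, rule vdvd_smult, rule hBa)
    hence 3: "vdvd (p^t) (E *v L - L)" unfolding L_def by (simp add: lc_mv lc_diff_b)
    have "vdvd (p^t) (E *v x - x)" using vdvd_trans[OF vdvd_trans[OF 2 3] vdvd_swap[THEN iffD1, OF 1]] .
    thus "x \<in> FixS p t E" unfolding FixS_def using vred_in[OF p0, of t "lc e c B"] x by simp
  qed
  have img2: "FixS p t E \<subseteq> \<phi> ` Box (p^t) e"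
  proof
    fix y assume y: "y \<in> FixS p t E"
    have "vdvd (p^t) (E *v y - y)" using y by (simp add: FixS_def)
    hence "\<exists>c. vdvd (p^t) (y - lc e c B)" using span_all[of t] by simp
    then obtain c where c: "vdvd (p^t) (y - lc e c B)" by blast
    define c' where "c' i = (if i < e then c i mod p^t else 0)" for i
    have cB: "c' \<in> Box (p^t) e" using p0 by (auto simp: c'_def Box_def)
    have cc: "vdvd (p^t) (lc e c' B - lc e c B)"
      by (rule vdvd_lc_c) (simp add: c'_def mod_diff_dvd)
    have "vdvd (p^t) (y - lc e c' B)" using vdvd_diff[OF c cc] by simp
    hence "vred p t (lc e c' B) = vred p t y" unfolding vred_eq_iff by (rule vdvd_swap[THEN iffD1])
    moreover have "vred p t y = y" using y by (simp add: FixS_def vred_id)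
    ultimately have "\<phi> c' = y" unfolding \<phi>_def by simp
    thus "y \<in> \<phi> ` Box (p^t) e" using cB by (metis image_eqI)
  qed
  have bij: "bij_betw \<phi> (Box (p^t) e) (FixS p t E)"
    unfolding bij_betw_def using inj img1 img2 by blast
  have "free_rank p t (FixS p t E) e"
    unfolding free_rank_def
    apply (rule exI[where x=B])
    using inB bij unfolding \<phi>_def Box_def lc_def by simp
  moreover have "card (FixS p t E) = nat (p^t) ^ e"
    using bij_betw_same_card[OF bij] card_Box by simp
  ultimately show ?thesis by blast
qed

lemma vred_add_l: "vred p s (vred p s a + b) = vred p s (a + b)"
  unfolding vred_eq_iff using vred_diff[of p s a] by simp
lemma vred_add_r: "vred p s (a + vred p s b) = vred p s (a + b)"
  unfolding vred_eq_iff using vred_diff[of p s b] by simp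

lemma vred_zero[simp]: "vred p s 0 = 0" by (simp add: vred_def vec_eq_iff)
lemma mv_zero[simp]: "E *v (0::int^'d) = 0" by (simp add: matrix_vector_mult_def vec_eq_iff)

lemma zero_Vs: "p > 0 \<Longrightarrow> 0 \<in> Vs p s" by (simp add: Vs_def)

lemma vgrp_comm: assumes p0: "p > 0" shows "comm_group (vgrp p s :: (int^'d) monoid)"
proof (rule comm_groupI)
  fix x y z :: "int^'d"
  show "x \<otimes>\<^bsub>vgrp p s\<^esub> y \<in> carrier (vgrp p s)" by (simp add: vgrp_def vred_in[OF p0])
  show "\<one>\<^bsub>vgrp p s\<^esub> \<in> carrier (vgrp p s)" by (simp add: vgrp_def zero_Vs[OF p0])
  show "x \<otimes>\<^bsub>vgrp p s\<^esub> y \<otimes>\<^bsub>vgrp p s\<^esub> z = x \<otimes>\<^bsub>vgrp p s\<^esub> (y \<otimes>\<^bsub>vgrp p s\<^esub> z)"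
    by (simp add: vgrp_def vred_add_l vred_add_r add.assoc)
  show "x \<otimes>\<^bsub>vgrp p s\<^esub> y = y \<otimes>\<^bsub>vgrp p s\<^esub> x" by (simp add: vgrp_def add.commute)
  show "x \<in> carrier (vgrp p s) \<Longrightarrow> \<one>\<^bsub>vgrp p s\<^esub> \<otimes>\<^bsub>vgrp p s\<^esub> x = x"
    by (simp add: vgrp_def vred_id)
  show "x \<in> carrier (vgrp p s) \<Longrightarrow> \<exists>y\<in>carrier (vgrp p s). y \<otimes>\<^bsub>vgrp p s\<^esub> x = \<one>\<^bsub>vgrp p s\<^esub>"
    by (rule bexI[where x="vred p s (- x)"]) (simp_all add: vgrp_def vred_add_l vred_in[OF p0])
qed

lemma fixz_congr: "vdvd q (x - y) \<Longrightarrow> vdvd q (E *v y - y) \<Longrightarrow> vdvd q (E *v x - x)"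
proof -
  assume a: "vdvd q (x - y)" and b: "vdvd q (E *v y - y)"
  have "E *v x - x = (E *v (x - y) - (x - y)) + (E *v y - y)" by (simp add: mv_diff)
  thus ?thesis using a b by (metis vdvd_add vdvd_diff vdvd_mv)
qed

lemma fix_vred: "p > 0 \<Longrightarrow> vdvd (p^s) (E *v x - x) \<Longrightarrow> vred p s x \<in> FixS p s E"
  unfolding FixS_def using vred_in[of p s x] fixz_congr[OF vred_diff] by blast

lemma fix_sub: assumes p0: "p > 0" shows "subgroup (FixS p s E) (vgrp p s :: (int^'d) monoid)"
proof -
  interpret G: comm_group "vgrp p s :: (int^'d) monoid" by (rule vgrp_comm[OF p0])
  show ?thesis
  proof (rule G.subgroupI)
    show "FixS p s E \<subseteq> carrier (vgrp p s)" by (auto simp: FixS_def vgrp_def)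
    have "0 \<in> FixS p s E" using zero_Vs[OF p0] by (simp add: FixS_def)
    thus "FixS p s E \<noteq> {}" by blast
  next
    fix a assume a: "a \<in> FixS p s E"
    have inveq: "inv\<^bsub>vgrp p s\<^esub> a = vred p s (- a)"
      by (rule G.inv_equality) (use a in \<open>simp_all add: vgrp_def vred_add_l vred_in[OF p0] FixS_def\<close>)
    have vn: "vdvd (p^s) (E *v (- a) - (- a))"
    proof -
      have h: "vdvd (p^s) (E *v a - a)" using a by (simp add: FixS_def)
      have eq: "E *v (- a) - (- a) = - (E *v a - a)" by (simp add: vec_eq_iff matrix_vector_mult_def sum_negf)
      show ?thesis unfolding eq vdvd_neg by (rule h)
    qed
    show "inv\<^bsub>vgrp p s\<^esub> a \<in> FixS p s E" unfolding inveq by (rule fix_vred[OF p0 vn])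
  next
    fix a b assume a: "a \<in> FixS p s E" and b: "b \<in> FixS p s E"
    have eq: "E *v (a + b) - (a + b) = (E *v a - a) + (E *v b - b)" by (simp add: mv_add)
    have "vdvd (p^s) (E *v a - a)" "vdvd (p^s) (E *v b - b)" using a b by (simp_all add: FixS_def)
    hence "vdvd (p^s) (E *v (a + b) - (a + b))" unfolding eq by (rule vdvd_add)
    thus "a \<otimes>\<^bsub>vgrp p s\<^esub> b \<in> FixS p s E" using fix_vred[OF p0] by (simp add: vgrp_def)
  qed
qed

lemma fix_group: "p > 0 \<Longrightarrow> group (subgrp p s (FixS p s E) :: (int^'d) monoid)"
  unfolding subgrp_def
  by (rule subgroup.subgroup_is_group[OF fix_sub]) (auto intro: comm_group.axioms(2) vgrp_comm)

lemma quot_iso: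
  fixes E :: "int^'d^'d"
  assumes pr: "prime p" and r1: "r \<ge> 1" and id: "idem (p^r) E"
  shows "subgrp p r (FixS p r E) Mod pmul p r (FixS p r E) \<cong> subgrp p 1 (FixS p 1 E)"
proof -
  have p0: "p > 0" using prime_gt_0_int[OF pr] .
  have pr1: "p dvd p^r" using r1 by (simp add: dvd_power)
  define G where "G = (subgrp p r (FixS p r E) :: (int^'d) monoid)"
  define H where "H = (subgrp p 1 (FixS p 1 E) :: (int^'d) monoid)"
  have cG: "carrier G = FixS p r E" and cH: "carrier H = FixS p 1 E"
    by (simp_all add: G_def H_def subgrp_def vgrp_def)
  have mG: "x \<otimes>\<^bsub>G\<^esub> y = vred p r (x + y)" and mH: "x \<otimes>\<^bsub>H\<^esub> y = vred p 1 (x + y)" for x y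
    by (simp_all add: G_def H_def subgrp_def vgrp_def)
  have oH: "\<one>\<^bsub>H\<^esub> = 0" by (simp add: H_def subgrp_def vgrp_def)
  have into: "vred p 1 x \<in> FixS p 1 E" if "x \<in> FixS p r E" for x
  proof -
    have "vdvd (p^r) (E *v x - x)" using that by (simp add: FixS_def)
    hence "vdvd p (E *v x - x)" by (rule vdvd_mono[OF pr1])
    thus ?thesis using fix_vred[OF p0, of 1 E x] by simp
  qed
  have hom: "vred p 1 \<in> hom G H"
  proof (rule homI)
    show "vred p 1 x \<in> carrier H" if "x \<in> carrier G" for x using that into cG cH by simp
    show "vred p 1 (x \<otimes>\<^bsub>G\<^esub> y) = vred p 1 x \<otimes>\<^bsub>H\<^esub> vred p 1 y" for x y
    proof -
      have "vdvd p (vred p r (x + y) - (x + y))" by (rule vdvd_mono[OF pr1 vred_diff])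
      hence "vred p 1 (vred p r (x + y)) = vred p 1 (x + y)" by (simp add: vred_eq_iff)
      thus ?thesis by (simp add: mG mH vred_add_l vred_add_r)
    qed
  qed
  have gh: "group_hom G H (vred p 1)"
    unfolding group_hom_def group_hom_axioms_def using fix_group[OF p0] hom unfolding G_def H_def by blast
  have surj: "vred p 1 ` carrier G = carrier H"
  proof
    show "vred p 1 ` carrier G \<subseteq> carrier H" using into cG cH by auto
    show "carrier H \<subseteq> vred p 1 ` carrier G"
    proof
      fix y assume "y \<in> carrier H"
      hence y: "y \<in> FixS p 1 E" using cH by simp
      define x where "x = vred p r (E *v y)"
      have "vdvd (p^r) (E *v (E *v y) - E *v y)" using id unfolding idem_def by blast
      hence xin: "x \<in> FixS p r E" unfolding x_def by (rule fix_vred[OF p0])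
      have 1: "vdvd p (x - E *v y)" unfolding x_def by (rule vdvd_mono[OF pr1 vred_diff])
      have 2: "vdvd p (E *v y - y)" using y by (simp add: FixS_def)
      have "vred p 1 x = vred p 1 y" unfolding vred_eq_iff using vdvd_trans[OF 1 2] by simp
      also have "\<dots> = y" using y by (simp add: FixS_def vred_id)
      finally show "y \<in> vred p 1 ` carrier G" using xin cG by (metis image_eqI)
    qed
  qed
  have ker: "kernel G H (vred p 1) = pmul p r (FixS p r E)"
  proof
    show "kernel G H (vred p 1) \<subseteq> pmul p r (FixS p r E)"
    proof
      fix x assume "x \<in> kernel G H (vred p 1)"
      hence x: "x \<in> FixS p r E" and x0: "vred p 1 x = 0" by (simp_all add: kernel_def cG oH)
      have "vdvd p x" using x0 vred_zero_iff[of p 1 x] by simp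
      define w where "w = (\<chi> i. x$i div p)"
      have xw: "x = p *s w" unfolding w_def by (rule vdvd_split) fact
      obtain r' where r': "r = Suc r'" using r1 by (cases r) auto
      have "vdvd (p * p^r') (p *s (E *v w - w))"
        using x r' by (simp add: FixS_def xw mv_smult smult_diff)
      hence ew: "vdvd (p^r') (E *v w - w)" by (rule vdvd_cancel[rotated]) (use p0 in simp)
      define z where "z = vred p r (E *v w)"
      have "vdvd (p^r) (E *v (E *v w) - E *v w)" using id unfolding idem_def by blast
      hence zin: "z \<in> FixS p r E" unfolding z_def by (rule fix_vred[OF p0])
      have "vdvd (p^r') (z - E *v w)" unfolding z_def
        by (rule vdvd_mono[OF _ vred_diff]) (simp add: r')
      hence "vdvd (p^r') (z - w)" using vdvd_trans ew by blast
      hence "vdvd (p * p^r') (p *s (z - w))" by (rule vdvd_smult2)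
      hence "vdvd (p^r) (p *s z - x)" by (simp add: r' xw smult_diff)
      hence "vred p r (p *s z) = vred p r x" by (simp add: vred_eq_iff)
      also have "\<dots> = x" using x by (simp add: FixS_def vred_id)
      finally show "x \<in> pmul p r (FixS p r E)" unfolding pmul_def using zin by (metis image_eqI)
    qed
    show "pmul p r (FixS p r E) \<subseteq> kernel G H (vred p 1)"
    proof
      fix x assume "x \<in> pmul p r (FixS p r E)"
      then obtain z where z: "z \<in> FixS p r E" and x: "x = vred p r (p *s z)" unfolding pmul_def by blast
      have eq: "E *v (p *s z) - p *s z = p *s (E *v z - z)" by (simp add: mv_smult smult_diff)
      have "vdvd (p^r) (E *v z - z)" using z by (simp add: FixS_def)
      hence "vdvd (p^r) (E *v (p *s z) - p *s z)" unfolding eq by (rule vdvd_smult)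
      hence xin: "x \<in> FixS p r E" unfolding x by (rule fix_vred[OF p0])
      have "vdvd p (x - p *s z)" unfolding x by (rule vdvd_mono[OF pr1 vred_diff])
      moreover have "vdvd p (p *s z)" by (simp add: vdvd_def)
      ultimately have "vdvd p x" using vdvd_add by fastforce
      hence "vred p 1 x = 0" using vred_zero_iff[of p 1 x] by simp
      thus "x \<in> kernel G H (vred p 1)" using xin by (simp add: kernel_def cG oH)
    qed
  qed
  have "G Mod kernel G H (vred p 1) \<cong> H" by (rule group_hom.FactGroup_iso[OF gh surj])
  thus ?thesis unfolding ker by (simp only: G_def H_def)
qed

lemma mpow_0[simp]: "mpow M 0 = mat 1" by (simp add: mpow_def)
lemma mpow_Suc: "mpow M (Suc n) = M ** mpow M n" by (simp add: mpow_def)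
lemma mpow_add: "mpow M (a + b) = mpow M a ** mpow M b"
  by (induction a) (simp_all add: mpow_Suc matrix_mul_assoc)

definition vc :: "int \<Rightarrow> int^'d^'d \<Rightarrow> int^'d^'d \<Rightarrow> bool" where
  "vc q A B \<longleftrightarrow> (\<forall>x. vdvd q (A *v x - B *v x))"

lemma vc_refl: "vc q A A" by (simp add: vc_def)
lemma vc_trans: "vc q A B \<Longrightarrow> vc q B C \<Longrightarrow> vc q A C"
  unfolding vc_def using vdvd_trans by blast
lemma vc_left: "vc q A B \<Longrightarrow> vc q (C ** A) (C ** B)"
  unfolding vc_def by (metis matrix_vector_mul_assoc mv_diff vdvd_mv)
lemma vc_mono: "q' dvd q \<Longrightarrow> vc q A B \<Longrightarrow> vc q' A B"
  unfolding vc_def using vdvd_mono by blast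
lemma entry_vc: "(\<forall>i j. A$i$j mod q = B$i$j mod q) \<Longrightarrow> vc q A B"
  unfolding vc_def vdvd_def
proof (intro allI)
  fix x i assume h: "\<forall>i j. A$i$j mod q = B$i$j mod q"
  have "(A *v x - B *v x) $ i = (\<Sum>j\<in>UNIV. (A$i$j - B$i$j) * x$j)"
    by (simp add: matrix_vector_mult_def sum_subtractf algebra_simps)
  moreover have "q dvd (\<Sum>j\<in>UNIV. (A$i$j - B$i$j) * x$j)"
    using h by (intro dvd_sum) (simp add: mod_eq_dvd_iff)
  ultimately show "q dvd (A *v x - B *v x) $ i" by simp
qed

lemma mv_mat_diff: "(mat 1 - E) *v x = x - E *v (x::int^'d)"
proof -
  have "(A - B) *v x = A *v x - B *v x" for A B :: "int^'d^'d"
    by (simp add: matrix_vector_mult_def sum_subtractf algebra_simps vec_eq_iff)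
  thus ?thesis by simp
qed

lemma Tmap_pow: "x \<in> Vs p s \<Longrightarrow> (Tmap p s M ^^ n) x = vred p s (mpow M n *v x)"
proof (induction n)
  case 0 thus ?case by (simp add: vred_id)
next
  case (Suc n)
  have "(Tmap p s M ^^ Suc n) x = Tmap p s M ((Tmap p s M ^^ n) x)" by simp
  also have "\<dots> = vred p s (M *v vred p s (mpow M n *v x))"
    unfolding Suc.IH[OF Suc.prems] by (simp add: Tmap_def)
  also have "\<dots> = vred p s (M *v (mpow M n *v x))"
    unfolding vred_eq_iff mv_diff[symmetric] by (rule vdvd_mv[OF vred_diff])
  finally show ?case by (simp add: mpow_Suc matrix_vector_mul_assoc)
qed

lemma exists_period:
  fixes M :: "int^'d^'d"
  assumes q0: "p > 0"
  shows "\<exists>m k. k \<ge> 1 \<and> (\<forall>i j. (mpow M (k + m)) $ i $ j mod p ^ s = (mpow M m) $ i $ j mod p ^ s)"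
proof -
  define f where "f n = (\<chi> i j. (mpow M n) $ i $ j mod p ^ s)" for n
  have "range f \<subseteq> {A :: int^'d^'d. \<forall>i. A$i \<in> Vs p s}"
    using q0 by (auto simp: f_def Vs_def)
  moreover have "finite {A :: int^'d^'d. \<forall>i. A$i \<in> Vs p s}"
    by (rule finite_vecset[OF finite_Vs])
  ultimately have "finite (range f)" by (rule finite_subset)
  hence "\<not> inj f" using finite_imageD infinite_UNIV_nat by blast
  then obtain a b where ab: "a \<noteq> b" "f a = f b" unfolding inj_def by blast
  obtain a' b' where ab': "a' < b'" "f a' = f b'"
  proof (cases "a < b")
    case True thus ?thesis using ab that by blast
  next
    case False thus ?thesis using ab that[of b a] by simp
  qed
  have "\<forall>i j. (mpow M ((b' - a') + a')) $ i $ j mod p ^ s = (mpow M a') $ i $ j mod p ^ s"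
    using ab' by (simp add: f_def vec_eq_iff)
  thus ?thesis using ab'(1) by (intro exI[of _ a'] exI[of _ "b' - a'"]) simp
qed

lemma periodic:
  assumes h: "vc q (mpow M (m + k)) (mpow M m)" and n: "n \<ge> m"
  shows "vc q (mpow M (n + t * k)) (mpow M n)"
proof -
  have step: "vc q (mpow M (n' + k)) (mpow M n')" if "n' \<ge> m" for n'
  proof -
    have "mpow M (n' + k) = mpow M (n' - m) ** mpow M (m + k)"
      using that by (simp add: mpow_add[symmetric])
    moreover have "mpow M n' = mpow M (n' - m) ** mpow M m"
      using that by (simp add: mpow_add[symmetric])
    ultimately show ?thesis using vc_left[OF h] by simp
  qed
  show ?thesis
  proof (induction t)
    case 0 thus ?case by (simp add: vc_refl)
  next
    case (Suc t)
    have "vc q (mpow M ((n + t * k) + k)) (mpow M (n + t * k))" using n by (intro step) simp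
    moreover have "n + Suc t * k = (n + t * k) + k" by simp
    ultimately show ?case using Suc vc_trans by metis
  qed
qed

lemma Per_eq:
  assumes p0: "p > 0" and e1: "e \<ge> 1" and h: "\<forall>j\<ge>1. vc (p^s) (mpow M (j * e)) (mpow M e)"
  shows "Per p s M = FixS p s (mpow M e)"
proof
  show "Per p s M \<subseteq> FixS p s (mpow M e)"
  proof
    fix x assume "x \<in> Per p s M"
    then obtain k where x: "x \<in> Vs p s" and k: "k \<ge> 1" and fx: "(Tmap p s M ^^ k) x = x"
      unfolding Per_def by blast
    have fix_iter: "((Tmap p s M ^^ k) ^^ n) x = x" for n
      by (induction n) (simp_all add: fx)
    have "(Tmap p s M ^^ (k * e)) x = x" using fix_iter[of e] by (simp add: funpow_mult)
    hence "vred p s (mpow M (k * e) *v x) = x" using Tmap_pow[OF x] by simp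
    moreover have "vred p s (mpow M (k * e) *v x) = vred p s (mpow M e *v x)"
      unfolding vred_eq_iff using h k unfolding vc_def by blast
    ultimately have "vred p s (mpow M e *v x) = x" by simp
    hence "vdvd (p^s) (x - mpow M e *v x)" using vred_diff[of p s "mpow M e *v x"] by simp
    hence "vdvd (p^s) (mpow M e *v x - x)" by (rule vdvd_swap[THEN iffD1])
    thus "x \<in> FixS p s (mpow M e)" using x by (simp add: FixS_def)
  qed
  show "FixS p s (mpow M e) \<subseteq> Per p s M"
  proof
    fix x assume "x \<in> FixS p s (mpow M e)"
    hence x: "x \<in> Vs p s" and d: "vdvd (p^s) (mpow M e *v x - x)" by (simp_all add: FixS_def)
    have "(Tmap p s M ^^ e) x = vred p s (mpow M e *v x)" by (rule Tmap_pow[OF x])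
    also have "\<dots> = vred p s x" unfolding vred_eq_iff by (rule d)
    also have "\<dots> = x" by (rule vred_id[OF x])
    finally show "x \<in> Per p s M" unfolding Per_def using x e1 by blast
  qed
qed

lemma Ker_eq:
  assumes h: "vc (p^s) (mpow M (m + k)) (mpow M m)" and k1: "k \<ge> 1" and me: "m \<le> e"
  shows "Ker p s (mpow M m) = FixS p s (mat 1 - mpow M e)"
proof -
  have fx: "FixS p s (mat 1 - mpow M e) = {x \<in> Vs p s. vdvd (p^s) (mpow M e *v x)}"
    by (simp add: FixS_def mv_mat_diff vdvd_neg)
  have "vdvd (p^s) (mpow M m *v x) \<longleftrightarrow> vdvd (p^s) (mpow M e *v x)" for x
  proof
    assume "vdvd (p^s) (mpow M m *v x)"
    hence "vdvd (p^s) (mpow M (e - m) *v (mpow M m *v x))" by (rule vdvd_mv)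
    thus "vdvd (p^s) (mpow M e *v x)" using me
      by (simp add: matrix_vector_mul_assoc mpow_add[symmetric])
  next
    assume a: "vdvd (p^s) (mpow M e *v x)"
    have "vc (p^s) (mpow M (m + e * k)) (mpow M m)" by (rule periodic[OF h]) simp
    hence 1: "vdvd (p^s) (mpow M (m + e * k) *v x - mpow M m *v x)" unfolding vc_def by blast
    have "e \<le> e * k" using k1 by simp
    hence "m + e * k = (m + e * k - e) + e" by linarith
    hence "mpow M (m + e * k) = mpow M (m + e * k - e) ** mpow M e"
      by (metis mpow_add)
    hence "mpow M (m + e * k) *v x = mpow M (m + e * k - e) *v (mpow M e *v x)"
      by (simp add: matrix_vector_mul_assoc)
    hence 2: "vdvd (p^s) (mpow M (m + e * k) *v x)" using vdvd_mv[OF a] by simp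
    show "vdvd (p^s) (mpow M m *v x)" using vdvd_diff[OF 2 1] by simp
  qed
  thus ?thesis unfolding fx Ker_def vred_zero_iff by blast
qed

lemma idem_F: "idem q E \<Longrightarrow> idem q (mat 1 - E)"
proof -
  assume "idem q E"
  moreover have "(mat 1 - E) *v ((mat 1 - E) *v x) - (mat 1 - E) *v x = E *v (E *v x) - E *v x" for x
    by (simp add: mv_mat_diff mv_diff algebra_simps)
  ultimately show ?thesis unfolding idem_def by simp
qed

lemma idem_mono: "q' dvd q \<Longrightarrow> idem q E \<Longrightarrow> idem q' E"
  unfolding idem_def using vdvd_mono by blast

lemma decomp_card:
  fixes E :: "int^'d^'d"
  assumes p0: "p > 0" and id: "idem (p^s) E"
  shows "card (Vs p s :: (int^'d) set) = card (FixS p s E) * card (FixS p s (mat 1 - E))"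
proof -
  define F where "F = mat 1 - E"
  have idF: "idem (p^s) F" unfolding F_def by (rule idem_F[OF id])
  define g where "g x = (vred p s (E *v x), vred p s (F *v x))" for x :: "int^'d"
  have "bij_betw g (Vs p s) (FixS p s E \<times> FixS p s F)"
    unfolding bij_betw_def
  proof (intro conjI)
    show "inj_on g (Vs p s)"
    proof (rule inj_onI)
      fix x y assume x: "x \<in> Vs p s" and y: "y \<in> Vs p s" and eq: "g x = g y"
      hence 1: "vdvd (p^s) (E *v x - E *v y)" and 2: "vdvd (p^s) (F *v x - F *v y)"
        by (simp_all add: g_def vred_eq_iff)
      have "x - y = (F *v x - F *v y) + (E *v x - E *v y)"
        by (simp add: F_def mv_mat_diff)
      hence "vdvd (p^s) (x - y)" using vdvd_add[OF 2 1] by simp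
      thus "x = y" using Vs_eq x y by blast
    qed
    show "g ` Vs p s = FixS p s E \<times> FixS p s F"
    proof
      show "g ` Vs p s \<subseteq> FixS p s E \<times> FixS p s F"
        using id idF unfolding idem_def g_def by (auto intro!: fix_vred[OF p0])
      show "FixS p s E \<times> FixS p s F \<subseteq> g ` Vs p s"
      proof
        fix ab assume "ab \<in> FixS p s E \<times> FixS p s F"
        then obtain a b where ab: "ab = (a, b)" and a: "a \<in> FixS p s E" and b: "b \<in> FixS p s F"
          by blast
        define x where "x = vred p s (a + b)"
        have xd: "vdvd (p^s) (x - (a + b))" unfolding x_def by (rule vred_diff)
        have ea: "vdvd (p^s) (E *v a - a)" using a by (simp add: FixS_def)
        have "vdvd (p^s) (F *v b - b)" using b by (simp add: FixS_def)
        hence eb: "vdvd (p^s) (E *v b)" by (simp add: F_def mv_mat_diff vdvd_neg)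
        have ex: "vdvd (p^s) (E *v x - E *v (a + b))" unfolding mv_diff[symmetric] by (rule vdvd_mv[OF xd])
        have eq1: "E *v x - a = (E *v x - E *v (a + b)) + (E *v a - a) + E *v b" by (simp add: mv_add)
        have 1: "vdvd (p^s) (E *v x - a)" unfolding eq1 by (rule vdvd_add[OF vdvd_add[OF ex ea] eb])
        have eq2: "F *v x - b = (x - (a + b)) - (E *v x - a)" by (simp add: F_def mv_mat_diff)
        have 2: "vdvd (p^s) (F *v x - b)" unfolding eq2 by (rule vdvd_diff[OF xd 1])
        have "vred p s (E *v x) = vred p s a" unfolding vred_eq_iff by (rule 1)
        hence "vred p s (E *v x) = a" using a vred_id[of a] by (simp add: FixS_def)
        moreover have "vred p s (F *v x) = vred p s b" unfolding vred_eq_iff by (rule 2)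
        hence "vred p s (F *v x) = b" using b vred_id[of b] by (simp add: FixS_def)
        ultimately have "g x = ab" by (simp add: g_def ab)
        moreover have "x \<in> Vs p s" unfolding x_def by (rule vred_in[OF p0])
        ultimately show "ab \<in> g ` Vs p s" by (metis image_eqI)
      qed
    qed
  qed
  hence "card (Vs p s :: (int^'d) set) = card (FixS p s E \<times> FixS p s F)" by (rule bij_betw_same_card)
  thus ?thesis by (simp add: card_cartesian_product F_def)
qed

lemma mexp_spec:
  fixes M :: "int^'d^'d"
  assumes p0: "p > 0"
  shows "\<exists>k\<ge>1. vc (p^s) (mpow M (mexp p s M + k)) (mpow M (mexp p s M))"
proof -
  have "\<exists>k\<ge>1. \<forall>i j. (mpow M (k + mexp p s M)) $ i $ j mod p ^ s = (mpow M (mexp p s M)) $ i $ j mod p ^ s"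
    unfolding mexp_def by (rule LeastI_ex) (use exists_period[OF p0, of M s] in blast)
  then obtain k where "k \<ge> 1" "\<forall>i j. (mpow M (k + mexp p s M)) $ i $ j mod p ^ s = (mpow M (mexp p s M)) $ i $ j mod p ^ s"
    by blast
  thus ?thesis using entry_vc by (metis add.commute)
qed

theorem corollary3p9:
  fixes p :: int and r :: nat and M :: "int^'d^'d"
  assumes "prime p" and "r \<ge> 1"
  shows "subgrp p r (Per p r M) Mod pmul p r (Per p r M) \<cong> subgrp p 1 (Per p 1 M)
    \<and> subgrp p r (Ker p r (mpow M (mexp p r M))) Mod pmul p r (Ker p r (mpow M (mexp p r M)))
        \<cong> subgrp p 1 (Ker p 1 (mpow M (mexp p 1 M)))
    \<and> (\<exists>d'. free_rank p r (Per p r M) d')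
    \<and> (\<forall>d'. free_rank p r (Per p r M) d' \<longrightarrow>
         card (Per p r M) = nat (p ^ (r * d'))
       \<and> card (Per p r M) = card (Per p 1 M) ^ r
       \<and> card (Ker p r (mpow M (mexp p r M))) = nat (p ^ (r * (CARD('d) - d')))
       \<and> card (Ker p r (mpow M (mexp p r M))) = card (Ker p 1 (mpow M (mexp p 1 M))) ^ r)"
proof -
  note pr = assms(1) and r1 = assms(2)
  have p0: "p > 0" using prime_gt_0_int[OF pr] .
  have p1: "p > 1" using prime_gt_1_int[OF pr] .
  define mr where "mr = mexp p r M"
  define m1 where "m1 = mexp p 1 M"
  obtain kr where kr: "kr \<ge> 1" and hr: "vc (p^r) (mpow M (mr + kr)) (mpow M mr)"
    using mexp_spec[OF p0, of r M] unfolding mr_def by blast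
  obtain k1 where k1: "k1 \<ge> 1" and h1: "vc (p^1) (mpow M (m1 + k1)) (mpow M m1)"
    using mexp_spec[OF p0, of 1 M] unfolding m1_def by blast
  define e where "e = (mr + m1 + 1) * kr"
  define E where "E = mpow M e"
  define F where "F = mat 1 - E"
  have "(mr + m1 + 1) * 1 \<le> (mr + m1 + 1) * kr" using kr by (rule mult_le_mono2)
  hence ge: "mr + m1 + 1 \<le> e" by (simp add: e_def)
  have e1: "e \<ge> 1" and emr: "mr \<le> e" and em1: "m1 \<le> e" using ge by simp_all
  have hper: "\<forall>j\<ge>1. vc (p^r) (mpow M (j * e)) (mpow M e)"
  proof (intro allI impI)
    fix j :: nat assume j: "j \<ge> 1"
    obtain j' where j': "j = Suc j'" using j by (cases j) auto
    have "j * e = e + (j' * (mr + m1 + 1)) * kr" unfolding j' e_def by (simp only: mult_Suc mult.assoc)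
    thus "vc (p^r) (mpow M (j * e)) (mpow M e)" using periodic[OF hr emr] by simp
  qed
  have pdv: "p^1 dvd p^r" using r1 by (simp add: dvd_power)
  have hper1: "\<forall>j\<ge>1. vc (p^1) (mpow M (j * e)) (mpow M e)"
  proof (intro allI impI)
    fix j :: nat assume "j \<ge> 1"
    thus "vc (p^1) (mpow M (j * e)) (mpow M e)" by (rule vc_mono[OF pdv, OF hper[rule_format]])
  qed
  have idE: "idem (p^r) E"
    unfolding idem_def
  proof
    fix x
    have "vc (p^r) (mpow M (2 * e)) (mpow M e)" using hper by simp
    moreover have "E *v (E *v x) = mpow M (2 * e) *v x"
      by (simp add: E_def matrix_vector_mul_assoc mpow_add[symmetric] mult_2)
    ultimately show "vdvd (p ^ r) (E *v (E *v x) - E *v x)" unfolding vc_def E_def by simp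
  qed
  have idF: "idem (p^r) F" unfolding F_def by (rule idem_F[OF idE])
  have idE1: "idem (p^1) E" by (rule idem_mono[OF pdv idE])
  have idF1: "idem (p^1) F" by (rule idem_mono[OF pdv idF])
  have Pr: "Per p r M = FixS p r E" unfolding E_def by (rule Per_eq[OF p0 e1 hper])
  have P1: "Per p 1 M = FixS p 1 E" unfolding E_def by (rule Per_eq[OF p0 e1 hper1])
  have Kr: "Ker p r (mpow M (mexp p r M)) = FixS p r F"
    unfolding F_def E_def mr_def[symmetric] by (rule Ker_eq[OF hr kr emr])
  have K1: "Ker p 1 (mpow M (mexp p 1 M)) = FixS p 1 F"
    unfolding F_def E_def m1_def[symmetric] by (rule Ker_eq[OF h1 k1 em1])
  have Q1: "subgrp p r (FixS p r E) Mod pmul p r (FixS p r E) \<cong> subgrp p 1 (FixS p 1 E)"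
    by (rule quot_iso[OF pr r1 idE])
  have Q2: "subgrp p r (FixS p r F) Mod pmul p r (FixS p r F) \<cong> subgrp p 1 (FixS p 1 F)"
    by (rule quot_iso[OF pr r1 idF])
  obtain eP bP where bP: "\<forall>i<eP. vdvd p (E *v bP i - bP i)" "indep p eP bP"
      "\<forall>y. vdvd p (E *v y - y) \<longrightarrow> (\<exists>c. vdvd p (y - lc eP c bP))"
    using basis1[OF pr, of E] by blast
  obtain eK bK where bK: "\<forall>i<eK. vdvd p (F *v bK i - bK i)" "indep p eK bK"
      "\<forall>y. vdvd p (F *v y - y) \<longrightarrow> (\<exists>c. vdvd p (y - lc eK c bK))"
    using basis1[OF pr, of F] by blast
  have LEr: "free_rank p r (FixS p r E) eP \<and> card (FixS p r E) = nat (p^r) ^ eP"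
    by (rule lift[OF pr r1 idE bP])
  have LE1: "card (FixS p 1 E) = nat (p^1) ^ eP"
    using lift[OF pr _ idE1 bP] by simp
  have LFr: "card (FixS p r F) = nat (p^r) ^ eK"
    using lift[OF pr r1 idF bK] by simp
  have LF1: "card (FixS p 1 F) = nat (p^1) ^ eK"
    using lift[OF pr _ idF1 bK] by simp
  have dec: "card (Vs p r :: (int^'d) set) = card (FixS p r E) * card (FixS p r F)"
    unfolding F_def by (rule decomp_card[OF p0 idE])
  define P where "P = nat p"
  have P1': "P > 1" using p1 by (simp add: P_def)
  have natp: "nat (p^n) = P^n" for n using p0 by (simp add: P_def nat_power_eq)
  have Pr1: "P^r > 1" by (rule one_less_power[OF P1']) (use r1 in simp)
  have "(P^r) ^ CARD('d) = (P^r)^eP * (P^r)^eK" using dec LEr LFr card_Vs[of p r, where 'd='d] by (simp add: natp)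
  hence "(P^r) ^ CARD('d) = (P^r)^(eP + eK)" by (simp add: power_add)
  hence dsum: "CARD('d) = eP + eK" using Pr1 by (simp add: power_inject_exp)
  have main: "card (Per p r M) = nat (p ^ (r * d'))
       \<and> card (Per p r M) = card (Per p 1 M) ^ r
       \<and> card (Ker p r (mpow M (mexp p r M))) = nat (p ^ (r * (CARD('d) - d')))
       \<and> card (Ker p r (mpow M (mexp p r M))) = card (Ker p 1 (mpow M (mexp p 1 M))) ^ r"
    if fr: "free_rank p r (Per p r M) d'" for d'
  proof -
    have "card (Per p r M) = (P^r)^d'" using free_rank_card[OF fr] by (simp add: natp)
    moreover have "card (Per p r M) = (P^r)^eP" using LEr Pr by (simp add: natp)
    ultimately have "(P^r)^d' = (P^r)^eP" by simp
    hence dd: "d' = eP" using Pr1 by (simp add: power_inject_exp)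
    have dk: "CARD('d) - d' = eK" using dsum dd by simp
    show ?thesis
      unfolding Pr P1 Kr K1 dk using LEr LE1 LFr LF1 dd
      by (simp add: natp power_mult[symmetric] mult.commute P_def)
  qed
  show ?thesis using Q1 Q2 LEr main unfolding Pr P1 Kr K1 by blast
qed

end
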